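(* Let $m$ and $c$ be positive integers, and for $0\le k\le n$ let $T_{n,k}$ be the number of $(c,m)$-colored $B_n$-partitions with exactly $k$ non-zero-blocks. For every $n\ge 1$, the polynomial $T_n(x)=\sum_{k=0}^n T_{n,k}\,x^k$ has $n$ distinct negative real roots.
   Context: Let $n,m,c$ be positive integers, let $C_1$ be a list of $c$ colors and $C_2$ a list of $m$ colors. A $(c,m)$-colored $B_n$-partition is a set partition $\pi$ of $[n]\cup\{0\}$ together with a coloring of the elements of $[n]$ defined as follows. For $x\in[n]\cup\{0\}$ let $b_x$ be the block of $\pi$ containing $x$. The block $b_0$ is called the zero-block, and every other block is a non-zero-block. Each $x\in[n]$ receives a color according to these rules: if $x=\min b_x$, then $x$ gets the first color of $C_2$; if $x\ne\min b_x$ and $x\in b_0$, then $x$ gets an arbitrary color from $C_1$; if $x\ne \min b_x$ and $x\notin b_0$, then $x$ gets an arbitrary color from $C_2$. Two such objects are equal exactly when they have the same underlying partition and the same coloring. (Note that when $0$ is the minimum of $b_0$, every element of $b_0\setminus\{0\}$ is colored from $C_1$.) *)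

theory Defs
  imports Complex_Main "HOL-Library.Disjoint_Sets"
begin

text \<open>Colors: C1 = {0..<c}, C2 = {0..<m}; the first color of C2 is 0.
  A colored B_n-partition is a pair (P, col) with P a set partition of {0..n}
  and col a coloring of [n] = {1..n} (normalised to 0 outside [n]).\<close>

definition colored_B_partitions :: "nat \<Rightarrow> nat \<Rightarrow> nat \<Rightarrow> (nat set set \<times> (nat \<Rightarrow> nat)) set" where
  "colored_B_partitions c m n =
    {(P, col). partition_on {0..n} P \<and>
       (\<forall>b\<in>P. \<forall>x\<in>b. x \<noteq> 0 \<longrightarrow>
          (if x = Min b then col x = 0
           else if 0 \<in> b then col x < c
           else col x < m)) \<and>
       (\<forall>x. x \<notin> {1..n} \<longrightarrow> col x = 0)}"

definition nonzero_blocks :: "nat set set \<Rightarrow> nat set set" where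
  "nonzero_blocks P = {b \<in> P. 0 \<notin> b}"

definition T_num :: "nat \<Rightarrow> nat \<Rightarrow> nat \<Rightarrow> nat \<Rightarrow> nat" where
  "T_num c m n k = card {(P, col) \<in> colored_B_partitions c m n. card (nonzero_blocks P) = k}"

end

theory Submission
  imports Defs "HOL-Computational_Algebra.Polynomial"
begin


lemma part_remove: "partition_on A P \<Longrightarrow> partition_on (A - {a}) ((\<lambda>x. x - {a}) ` P - {{}})"
  by (rule partition_on_transform) (auto simp: disjnt_def)

lemma part_single: "partition_on A P \<Longrightarrow> a \<notin> A \<Longrightarrow> partition_on (insert a A) (insert {a} P)"
  by (auto simp: partition_on_def disjoint_def pairwise_def disjnt_def)

lemma part_extend: "partition_on A P \<Longrightarrow> b \<in> P \<Longrightarrow> a \<notin> A \<Longrightarrow>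
   partition_on (insert a A) ((\<lambda>x. if x = b then insert a x else x) ` P)"
  unfolding partition_on_def disjoint_def pairwise_def disjnt_def
  by (auto; blast)

lemma part_uniq: "partition_on A P \<Longrightarrow> b \<in> P \<Longrightarrow> b' \<in> P \<Longrightarrow> x \<in> b \<Longrightarrow> x \<in> b' \<Longrightarrow> b = b'"
  unfolding partition_on_def disjoint_def pairwise_def disjnt_def by blast

lemma part_block: "partition_on A P \<Longrightarrow> b \<in> P \<Longrightarrow> b \<noteq> {} \<and> b \<subseteq> A"
  unfolding partition_on_def by blast

lemma CB_iff: "(P, col) \<in> colored_B_partitions c m n \<longleftrightarrow>
   partition_on {0..n} P \<and>
       (\<forall>b\<in>P. \<forall>x\<in>b. x \<noteq> 0 \<longrightarrow>
          (if x = Min b then col x = 0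
           else if 0 \<in> b then col x < c
           else col x < m)) \<and>
       (\<forall>x. x \<notin> {1..n} \<longrightarrow> col x = 0)"
  unfolding colored_B_partitions_def by simp

lemma ins1_mem:
  assumes "(P, col) \<in> colored_B_partitions c m n"
  shows "(insert {Suc n} P, col) \<in> colored_B_partitions c m (Suc n)"
    and "{Suc n} \<notin> P"
    and "card (nonzero_blocks (insert {Suc n} P)) = Suc (card (nonzero_blocks P))"
proof -
  have p: "partition_on {0..n} P" and cl: "\<forall>b\<in>P. \<forall>x\<in>b. x \<noteq> 0 \<longrightarrow>
          (if x = Min b then col x = 0 else if 0 \<in> b then col x < c else col x < m)"
    and out: "\<forall>x. x \<notin> {1..n} \<longrightarrow> col x = 0" using assms by (auto simp: CB_iff)
  have fin: "finite P" using p by (meson finite_atLeastAtMost finite_elements)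
  have nP: "{Suc n} \<notin> P" using part_block[OF p, of "{Suc n}"] by auto
  then show "{Suc n} \<notin> P" .
  have "partition_on (insert (Suc n) {0..n}) (insert {Suc n} P)" by (rule part_single[OF p]) auto
  moreover have "insert (Suc n) {0..n} = {0..Suc n}" by auto
  ultimately have p2: "partition_on {0..Suc n} (insert {Suc n} P)" by simp
  have c0: "col (Suc n) = 0" using out by auto
  show "(insert {Suc n} P, col) \<in> colored_B_partitions c m (Suc n)"
    unfolding CB_iff using p2 cl c0 out by auto
  have "nonzero_blocks (insert {Suc n} P) = insert {Suc n} (nonzero_blocks P)"
    by (auto simp: nonzero_blocks_def)
  then show "card (nonzero_blocks (insert {Suc n} P)) = Suc (card (nonzero_blocks P))"
    using nP fin by (simp add: nonzero_blocks_def)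
qed

lemma ins2_mem:
  assumes "(P, col) \<in> colored_B_partitions c m n" and bP: "b \<in> P"
    and j: "j < (if 0 \<in> b then c else m)"
  defines "g \<equiv> (\<lambda>x. if x = b then insert (Suc n) x else x)"
  shows "(g ` P, col(Suc n := j)) \<in> colored_B_partitions c m (Suc n)"
    and "inj_on g P"
    and "card (nonzero_blocks (g ` P)) = card (nonzero_blocks P)"
proof -
  have p: "partition_on {0..n} P" and cl: "\<forall>b\<in>P. \<forall>x\<in>b. x \<noteq> 0 \<longrightarrow>
          (if x = Min b then col x = 0 else if 0 \<in> b then col x < c else col x < m)"
    and out: "\<forall>x. x \<notin> {1..n} \<longrightarrow> col x = 0" using assms by (auto simp: CB_iff)
  have fin: "finite P" using p by (meson finite_atLeastAtMost finite_elements)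
  have blk: "\<And>x. x \<in> P \<Longrightarrow> x \<noteq> {} \<and> x \<subseteq> {0..n}" using part_block[OF p] by blast
  have "partition_on (insert (Suc n) {0..n}) (g ` P)" unfolding g_def by (rule part_extend[OF p bP]) auto
  moreover have "insert (Suc n) {0..n} = {0..Suc n}" by auto
  ultimately have p2: "partition_on {0..Suc n} (g ` P)" by simp
  have fb: "finite b" "b \<noteq> {}" "b \<subseteq> {0..n}" using blk[OF bP] finite_subset by auto
  have minb: "Min (insert (Suc n) b) = Min b"
  proof -
    have "Min b \<in> b" using fb Min_in by blast
    then have "Min b \<le> n" using fb(3) by (meson atLeastAtMost_iff subsetD)
    then show ?thesis using fb by (simp add: Min_insert)
  qed
  have minb2: "Min b \<noteq> Suc n" using fb Min_in by fastforce
  have cl2: "\<forall>B\<in>g ` P. \<forall>x\<in>B. x \<noteq> 0 \<longrightarrow>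
          (if x = Min B then (col(Suc n := j)) x = 0 else if 0 \<in> B then (col(Suc n := j)) x < c else (col(Suc n := j)) x < m)"
  proof (intro ballI impI)
    fix B x assume B: "B \<in> g ` P" and x: "x \<in> B" "x \<noteq> 0"
    then obtain y where y: "y \<in> P" "B = g y" by auto
    show "if x = Min B then (col(Suc n := j)) x = 0 else if 0 \<in> B then (col(Suc n := j)) x < c else (col(Suc n := j)) x < m"
    proof (cases "y = b")
      case True
      then have B': "B = insert (Suc n) b" using y g_def by simp
      show ?thesis
      proof (cases "x = Suc n")
        case True
        then show ?thesis using B' minb minb2 j by auto
      next
        case False
        then have "x \<in> b" using x B' by auto
        then show ?thesis using cl bP x False B' minb by auto
      qed
    next
      case False
      then have B': "B = y" using y g_def by simp
      have "x \<noteq> Suc n" using blk[OF y(1)] x B' by auto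
      then show ?thesis using cl y(1) x B' by auto
    qed
  qed
  have out2: "\<forall>x. x \<notin> {1..Suc n} \<longrightarrow> (col(Suc n := j)) x = 0" using out by auto
  show "(g ` P, col(Suc n := j)) \<in> colored_B_partitions c m (Suc n)"
    unfolding CB_iff using p2 cl2 out2 by blast
  show inj: "inj_on g P"
  proof (rule inj_onI)
    fix x y assume "x \<in> P" "y \<in> P" "g x = g y"
    then show "x = y" unfolding g_def using blk
      by (auto split: if_splits) (metis atLeastAtMost_iff insertI1 not_less_eq_eq order_refl subsetD)+
  qed
  have "nonzero_blocks (g ` P) = g ` nonzero_blocks P"
    unfolding nonzero_blocks_def g_def by auto
  then show "card (nonzero_blocks (g ` P)) = card (nonzero_blocks P)"
    using inj by (simp add: card_image nonzero_blocks_def inj_on_subset)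
qed

lemma decomp:
  assumes "(P, col) \<in> colored_B_partitions c m (Suc n)"
  shows "(\<exists>P0. (P0, col) \<in> colored_B_partitions c m n \<and> P = insert {Suc n} P0) \<or>
         (\<exists>P0 b. (P0, col(Suc n := 0)) \<in> colored_B_partitions c m n \<and> b \<in> P0 \<and>
              col (Suc n) < (if 0 \<in> b then c else m) \<and>
              P = (\<lambda>x. if x = b then insert (Suc n) x else x) ` P0)"
proof -
  let ?N = "Suc n"
  have p: "partition_on {0..?N} P" and cl: "\<forall>b\<in>P. \<forall>x\<in>b. x \<noteq> 0 \<longrightarrow>
          (if x = Min b then col x = 0 else if 0 \<in> b then col x < c else col x < m)"
    and out: "\<forall>x. x \<notin> {1..?N} \<longrightarrow> col x = 0" using assms by (auto simp: CB_iff)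
  have blk: "\<And>x. x \<in> P \<Longrightarrow> x \<noteq> {} \<and> x \<subseteq> {0..?N}" using part_block[OF p] by blast
  have "?N \<in> \<Union>P" using partition_onD1[OF p] by auto
  then obtain B where B: "B \<in> P" "?N \<in> B" by auto
  have oth: "\<And>y. y \<in> P \<Longrightarrow> y \<noteq> B \<Longrightarrow> ?N \<notin> y" using part_uniq[OF p] B by blast
  have oth2: "\<And>y. y \<in> P \<Longrightarrow> y \<noteq> B \<Longrightarrow> y \<inter> B = {}" using part_uniq[OF p] B by blast
  show ?thesis
  proof (cases "B = {?N}")
    case True
    define P0 where "P0 = P - {{?N}}"
    have PP: "P = insert {?N} P0" using B True P0_def by auto
    have dj: "disjnt {?N} (\<Union>P0)" using oth True unfolding P0_def disjnt_def by auto
    have "partition_on ({0..?N} - {?N}) P0"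
      using partition_on_insert[OF dj, of "{0..?N}"] p PP by simp
    moreover have "{0..?N} - {?N} = {0..n}" by auto
    ultimately have p0: "partition_on {0..n} P0" by simp
    have cN: "col ?N = 0" using cl B True by auto
    have out': "\<forall>x. x \<notin> {1..n} \<longrightarrow> col x = 0"
    proof (intro allI impI)
      fix x assume "x \<notin> {1..n}" then show "col x = 0" using out cN by (cases "x = ?N") auto
    qed
    have "(P0, col) \<in> colored_B_partitions c m n"
      unfolding CB_iff using p0 cl PP out' by auto
    then show ?thesis using PP by blast
  next
    case False
    define b where "b = B - {?N}"
    have bne: "b \<noteq> {}" using False B b_def by auto
    have Bb: "B = insert ?N b" "?N \<notin> b" using B b_def by auto
    define P0 where "P0 = (\<lambda>x. x - {?N}) ` P - {{}}"
    have P0e: "P0 = insert b (P - {B})"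
    proof
      show "P0 \<subseteq> insert b (P - {B})"
      proof
        fix z assume "z \<in> P0"
        then obtain y where y: "y \<in> P" "z = y - {?N}" unfolding P0_def by auto
        show "z \<in> insert b (P - {B})"
        proof (cases "y = B")
          case True then show ?thesis using y b_def by auto
        next
          case False then have "z = y" using y oth by auto
          then show ?thesis using y False by auto
        qed
      qed
      show "insert b (P - {B}) \<subseteq> P0" unfolding P0_def b_def using oth blk bne B b_def by auto

    qed
    have "partition_on ({0..?N} - {?N}) P0" unfolding P0_def by (rule part_remove[OF p])
    moreover have "{0..?N} - {?N} = {0..n}" by auto
    ultimately have p0: "partition_on {0..n} P0" by simp
    have fb: "finite b" "b \<subseteq> {0..n}" using part_block[OF p0, of b] P0e finite_subset by auto
    have minb: "Min B = Min b"
    proof -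
      have "Min b \<in> b" using fb bne Min_in by blast
      then have "Min b \<le> n" using fb(2) by (meson atLeastAtMost_iff subsetD)
      then show ?thesis using fb bne Bb by (simp add: Min_insert)
    qed
    have minb2: "Min b \<noteq> ?N" using fb bne Min_in Bb by metis
    let ?g = "\<lambda>x. if x = b then insert ?N x else x"
    have gP: "?g ` P0 = P"
    proof -
      have "\<And>x. x \<in> P - {B} \<Longrightarrow> x \<noteq> b" using oth2 bne Bb by blast
      then have "?g ` P0 = insert B (P - {B})" unfolding P0e using Bb by auto
      then show ?thesis using B by auto
    qed
    have cl0: "\<forall>bb\<in>P0. \<forall>x\<in>bb. x \<noteq> 0 \<longrightarrow>
          (if x = Min bb then (col(?N:=0)) x = 0 else if 0 \<in> bb then (col(?N:=0)) x < c else (col(?N:=0)) x < m)"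
    proof (intro ballI impI)
      fix bb x assume bb: "bb \<in> P0" and x: "x \<in> bb" "x \<noteq> 0"
      show "if x = Min bb then (col(?N:=0)) x = 0 else if 0 \<in> bb then (col(?N:=0)) x < c else (col(?N:=0)) x < m"
      proof (cases "bb = b")
        case True
        then have "x \<noteq> ?N" "x \<in> B" using x Bb by auto
        then show ?thesis using cl B True minb Bb x by auto
      next
        case False
        then have "bb \<in> P" "bb \<noteq> B" using bb P0e by auto
        then show ?thesis using cl oth x by auto
      qed
    qed
    have out0: "\<forall>x. x \<notin> {1..n} \<longrightarrow> (col(?N:=0)) x = 0" using out by auto
    have mem: "(P0, col(?N := 0)) \<in> colored_B_partitions c m n"
      unfolding CB_iff using p0 cl0 out0 by blast
    have cN: "col ?N < (if 0 \<in> b then c else m)"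
      using cl B minb minb2 Bb by auto
    show ?thesis using mem cN gP P0e by blast
  qed
qed

definition Qs :: "nat \<Rightarrow> nat \<Rightarrow> nat \<Rightarrow> nat \<Rightarrow> (nat set set \<times> (nat \<Rightarrow> nat)) set" where
  "Qs c m n k = {(P, col) \<in> colored_B_partitions c m n. card (nonzero_blocks P) = k}"

definition A2 :: "nat \<Rightarrow> nat \<Rightarrow> nat \<Rightarrow> nat \<Rightarrow> ((nat set set \<times> (nat \<Rightarrow> nat)) \<times> nat set \<times> nat) set" where
  "A2 c m n k = Sigma (Qs c m n k) (\<lambda>(P,col). Sigma P (\<lambda>b. {..<(if 0 \<in> b then c else m)}))"

definition F1 :: "nat \<Rightarrow> (nat set set \<times> (nat \<Rightarrow> nat)) \<Rightarrow> (nat set set \<times> (nat \<Rightarrow> nat))" where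
  "F1 n = (\<lambda>(P,col). (insert {Suc n} P, col))"

definition F2 :: "nat \<Rightarrow> ((nat set set \<times> (nat \<Rightarrow> nat)) \<times> nat set \<times> nat) \<Rightarrow> (nat set set \<times> (nat \<Rightarrow> nat))" where
  "F2 n = (\<lambda>((P,col),(b,j)). ((\<lambda>x. if x = b then insert (Suc n) x else x) ` P, col(Suc n := j)))"

lemma decompQ: "Qs c m (Suc n) k = F1 n ` (if k = 0 then {} else Qs c m n (k-1)) \<union> F2 n ` A2 c m n k"
proof
  show "Qs c m (Suc n) k \<subseteq> F1 n ` (if k = 0 then {} else Qs c m n (k-1)) \<union> F2 n ` A2 c m n k"
  proof
    fix z assume z: "z \<in> Qs c m (Suc n) k"
    obtain P col where zz: "z = (P, col)" by (cases z)
    have mem: "(P,col) \<in> colored_B_partitions c m (Suc n)" and ck: "card (nonzero_blocks P) = k"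
      using z zz by (auto simp: Qs_def)
    from decomp[OF mem] show "z \<in> F1 n ` (if k = 0 then {} else Qs c m n (k-1)) \<union> F2 n ` A2 c m n k"
    proof
      assume "\<exists>P0. (P0, col) \<in> colored_B_partitions c m n \<and> P = insert {Suc n} P0"
      then obtain P0 where P0: "(P0, col) \<in> colored_B_partitions c m n" "P = insert {Suc n} P0" by blast
      have "k = Suc (card (nonzero_blocks P0))" using ins1_mem(3)[OF P0(1)] P0(2) ck by simp
      then have "k \<noteq> 0" "(P0, col) \<in> Qs c m n (k-1)" using P0 by (auto simp: Qs_def)
      moreover have "z = F1 n (P0, col)" using zz P0 by (simp add: F1_def)
      ultimately show ?thesis by auto
    next
      assume "\<exists>P0 b. (P0, col(Suc n := 0)) \<in> colored_B_partitions c m n \<and> b \<in> P0 \<and>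
              col (Suc n) < (if 0 \<in> b then c else m) \<and>
              P = (\<lambda>x. if x = b then insert (Suc n) x else x) ` P0"
      then obtain P0 b where P0: "(P0, col(Suc n := 0)) \<in> colored_B_partitions c m n" "b \<in> P0"
            "col (Suc n) < (if 0 \<in> b then c else m)"
            "P = (\<lambda>x. if x = b then insert (Suc n) x else x) ` P0" by blast
      have "card (nonzero_blocks P0) = k" using ins2_mem(3)[OF P0(1-3)] P0(4) ck by simp
      then have "((P0, col(Suc n := 0)), (b, col (Suc n))) \<in> A2 c m n k"
        using P0 by (auto simp: A2_def Qs_def)
      moreover have "z = F2 n ((P0, col(Suc n := 0)), (b, col (Suc n)))" using zz P0 by (simp add: F2_def)
      ultimately show ?thesis by blast
    qed
  qed
  show "F1 n ` (if k = 0 then {} else Qs c m n (k-1)) \<union> F2 n ` A2 c m n k \<subseteq> Qs c m (Suc n) k"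
  proof
    fix z assume "z \<in> F1 n ` (if k = 0 then {} else Qs c m n (k-1)) \<union> F2 n ` A2 c m n k"
    then consider "z \<in> F1 n ` (if k = 0 then {} else Qs c m n (k-1))" | "z \<in> F2 n ` A2 c m n k" by blast
    then show "z \<in> Qs c m (Suc n) k"
    proof cases
      case 1
      then obtain P col where "k \<noteq> 0" "(P,col) \<in> Qs c m n (k-1)" "z = F1 n (P,col)"
        by (auto split: if_splits)
      then show ?thesis using ins1_mem[of P col c m n] by (auto simp: Qs_def F1_def)
    next
      case 2
      then obtain P col b j where "(P,col) \<in> Qs c m n k" "b \<in> P" "j < (if 0 \<in> b then c else m)"
          "z = F2 n ((P,col),(b,j))"
        by (auto simp: A2_def)
      then show ?thesis using ins2_mem[of P col c m n b j] by (auto simp: Qs_def F2_def)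
    qed
  qed
qed

lemma inj_F1: "inj_on (F1 n) (Qs c m n k)"
proof (rule inj_onI)
  fix x y assume x: "x \<in> Qs c m n k" and y: "y \<in> Qs c m n k" and e: "F1 n x = F1 n y"
  obtain P col where xx: "x = (P,col)" by (cases x)
  obtain P' col' where yy: "y = (P',col')" by (cases y)
  have "{Suc n} \<notin> P" "{Suc n} \<notin> P'" using ins1_mem(2) x y xx yy by (auto simp: Qs_def)
  moreover have "insert {Suc n} P = insert {Suc n} P'" "col = col'" using e xx yy by (auto simp: F1_def)
  ultimately have "P = P'" by (metis Diff_insert_absorb)
  then show "x = y" using xx yy \<open>col = col'\<close> by simp
qed

lemma inj_F2: "inj_on (F2 n) (A2 c m n k)"
proof (rule inj_onI)
  fix x y assume x: "x \<in> A2 c m n k" and y: "y \<in> A2 c m n k" and e: "F2 n x = F2 n y"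
  obtain P col b j where xx: "x = ((P,col),(b,j))" by (cases x; cases "fst x"; cases "snd x") auto
  obtain P' col' b' j' where yy: "y = ((P',col'),(b',j'))" by (cases y; cases "fst y"; cases "snd y") auto
  have m1: "(P,col) \<in> colored_B_partitions c m n" "b \<in> P" using x xx by (auto simp: A2_def Qs_def)
  have m2: "(P',col') \<in> colored_B_partitions c m n" "b' \<in> P'" using y yy by (auto simp: A2_def Qs_def)
  have p1: "partition_on {0..n} P" using m1 by (simp add: CB_iff)
  have p2: "partition_on {0..n} P'" using m2 by (simp add: CB_iff)
  have nN1: "\<And>z. z \<in> P \<Longrightarrow> Suc n \<notin> z" using part_block[OF p1] by fastforce
  have nN2: "\<And>z. z \<in> P' \<Longrightarrow> Suc n \<notin> z" using part_block[OF p2] by fastforce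
  have o1: "col (Suc n) = 0" using m1 by (simp add: CB_iff)
  have o2: "col' (Suc n) = 0" using m2 by (simp add: CB_iff)
  let ?g = "\<lambda>x. if x = b then insert (Suc n) x else x"
  let ?g' = "\<lambda>x. if x = b' then insert (Suc n) x else x"
  have E1: "?g ` P = ?g' ` P'" and E2: "col(Suc n := j) = col'(Suc n := j')"
    using e xx yy by (auto simp: F2_def)
  have "j = j'" using fun_cong[OF E2, of "Suc n"] by simp
  have "col = col'"
  proof
    fix t show "col t = col' t" using fun_cong[OF E2, of t] o1 o2 by (cases "t = Suc n") auto
  qed
  have r1: "(\<lambda>z. z - {Suc n}) ` ?g ` P = P"
  proof -
    have "(\<lambda>z. z - {Suc n}) ` ?g ` P = (\<lambda>z. z - {Suc n} ) ` P" by (auto simp: image_image)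
    also have "\<dots> = P" using nN1 by (auto simp: image_iff)
    finally show ?thesis .
  qed
  have r2: "(\<lambda>z. z - {Suc n}) ` ?g' ` P' = P'"
  proof -
    have "(\<lambda>z. z - {Suc n}) ` ?g' ` P' = (\<lambda>z. z - {Suc n} ) ` P'" by (auto simp: image_image)
    also have "\<dots> = P'" using nN2 by (auto simp: image_iff)
    finally show ?thesis .
  qed
  have "P = (\<lambda>z. z - {Suc n}) ` ?g ` P" using r1 by simp
  also have "\<dots> = (\<lambda>z. z - {Suc n}) ` ?g' ` P'" using E1 by simp
  also have "\<dots> = P'" using r2 by simp
  finally have "P = P'" .
  have "insert (Suc n) b \<in> ?g ` P" using m1(2) by force
  then have "insert (Suc n) b \<in> ?g' ` P'" unfolding E1 .
  then obtain w where w: "w \<in> P'" "insert (Suc n) b = ?g' w" by blast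
  have "b = b'"
  proof (cases "w = b'")
    case True
    then have "insert (Suc n) b = insert (Suc n) b'" using w by simp
    then show ?thesis using nN1[OF m1(2)] nN2[OF m2(2)] by (metis Diff_insert_absorb)
  next
    case False
    then show ?thesis using w nN2 by (metis insertI1)
  qed
  show "x = y" using xx yy \<open>P = P'\<close> \<open>b = b'\<close> \<open>j = j'\<close> \<open>col = col'\<close> by simp
qed

lemma disj_F12: "F1 n ` Qs c m n k' \<inter> F2 n ` A2 c m n k = {}"
proof -
  have "{Suc n} \<notin> fst (F2 n z)" if z: "z \<in> A2 c m n k" for z
  proof -
    obtain P col b j where xx: "z = ((P,col),(b,j))" by (cases z; cases "fst z"; cases "snd z") auto
    have m1: "(P,col) \<in> colored_B_partitions c m n" "b \<in> P" using z xx by (auto simp: A2_def Qs_def)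
    have p1: "partition_on {0..n} P" using m1 by (simp add: CB_iff)
    have nN1: "\<And>z. z \<in> P \<Longrightarrow> Suc n \<notin> z \<and> z \<noteq> {}" using part_block[OF p1] by fastforce
    have "{Suc n} \<noteq> (if w = b then insert (Suc n) w else w)" if "w \<in> P" for w
    proof (cases "w = b")
      case True
      have "b \<noteq> {}" "Suc n \<notin> b" using nN1 m1 by auto
      then show ?thesis using True by auto
    next
      case False then show ?thesis using nN1[OF that] by auto
    qed
    then have H: "{Suc n} \<notin> (\<lambda>w. if w = b then insert (Suc n) w else w) ` P" by blast
    have "fst (F2 n z) = (\<lambda>w. if w = b then insert (Suc n) w else w) ` P" by (simp add: xx F2_def)
    then show ?thesis using H by simp
  qed
  moreover have "{Suc n} \<in> fst (F1 n z)" for z by (auto simp: F1_def split: prod.splits)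
  ultimately show ?thesis by fastforce
qed

lemma Q0: "Qs c m 0 k = (if k = 0 then {({{0}}, \<lambda>_. 0)} else {})"
proof -
  have CB0: "colored_B_partitions c m 0 = {({{0}}, \<lambda>_. 0)}"
  proof (intro set_eqI iffI)
    fix z assume z: "z \<in> colored_B_partitions c m 0"
    obtain P col where zz: "z = (P,col)" by (cases z)
    have p: "partition_on {0} P" and o: "\<forall>x. col x = 0" using z zz by (auto simp: CB_iff)
    have "P = {{0}}"
    proof -
      have "\<And>b. b \<in> P \<Longrightarrow> b = {0}" using part_block[OF p] by blast
      moreover have "P \<noteq> {}" using partition_onD1[OF p] by auto
      ultimately show ?thesis by blast
    qed
    moreover have "col = (\<lambda>_. 0)" using o by auto
    ultimately show "z \<in> {({{0}}, \<lambda>_. 0)}" using zz by simp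
  next
    fix z :: "nat set set \<times> (nat \<Rightarrow> nat)" assume "z \<in> {({{0}}, \<lambda>_. 0)}"
    then show "z \<in> colored_B_partitions c m 0"
      by (auto simp: CB_iff partition_on_space)
  qed
  have "nonzero_blocks {{0}} = {}" by (auto simp: nonzero_blocks_def)
  then show ?thesis unfolding Qs_def CB0 by auto
qed

lemma finQ: "finite (Qs c m n k)"
proof (induction n arbitrary: k)
  case 0
  then show ?case by (simp add: Q0)
next
  case (Suc n)
  have "finite (A2 c m n k)" unfolding A2_def
  proof (rule finite_SigmaI)
    show "finite (Qs c m n k)" by (rule Suc.IH)
    fix z assume z: "z \<in> Qs c m n k"
    obtain P col where zz: "z = (P,col)" by (cases z)
    have "partition_on {0..n} P" using z zz by (auto simp: Qs_def CB_iff)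
    then have "finite P" by (meson finite_atLeastAtMost finite_elements)
    then show "finite ((\<lambda>(P, col). SIGMA b:P. {..<if 0 \<in> b then c else m}) z)"
      using zz by auto
  qed
  then show ?case unfolding decompQ using Suc.IH by auto
qed

lemma sum_blocks:
  assumes p: "partition_on {0..n} P"
  shows "(\<Sum>b\<in>P. (if 0 \<in> b then c else m)) = c + m * card (nonzero_blocks P)"
proof -
  have fin: "finite P" using p by (meson finite_atLeastAtMost finite_elements)
  obtain B where B: "B \<in> P" "0 \<in> B" using partition_onD1[OF p] by (metis UnionE atLeastAtMost_iff le0 order_refl)
  have "P \<inter> {x. 0 \<in> x} = {B}" using part_uniq[OF p] B by blast
  moreover have "P \<inter> - {x. 0 \<in> x} = nonzero_blocks P" by (auto simp: nonzero_blocks_def)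
  ultimately show ?thesis using fin by (simp add: sum.If_cases)
qed

lemma card_A2: "card (A2 c m n k) = (c + m * k) * card (Qs c m n k)"
proof -
  have "card (A2 c m n k) = (\<Sum>z\<in>Qs c m n k. card ((\<lambda>(P, col). SIGMA b:P. {..<if 0 \<in> b then c else m}) z))"
    unfolding A2_def
  proof (rule card_SigmaI)
    show "finite (Qs c m n k)" by (rule finQ)
    show "\<forall>z\<in>Qs c m n k. finite ((\<lambda>(P, col). SIGMA b:P. {..<if 0 \<in> b then c else m}) z)"
    proof
    fix z assume z: "z \<in> Qs c m n k"
    obtain P col where zz: "z = (P,col)" by (cases z)
    have "partition_on {0..n} P" using z zz by (auto simp: Qs_def CB_iff)
    then have "finite P" by (meson finite_atLeastAtMost finite_elements)
    then show "finite ((\<lambda>(P, col). SIGMA b:P. {..<if 0 \<in> b then c else m}) z)"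
      using zz by auto
    qed
  qed
  also have "\<dots> = (\<Sum>z\<in>Qs c m n k. c + m * k)"
  proof (rule sum.cong[OF refl])
    fix z assume z: "z \<in> Qs c m n k"
    obtain P col where zz: "z = (P,col)" by (cases z)
    have p: "partition_on {0..n} P" and ck: "card (nonzero_blocks P) = k" using z zz by (auto simp: Qs_def CB_iff)
    then have "finite P" by (meson finite_atLeastAtMost finite_elements)
    then have "card (SIGMA b:P. {..<if 0 \<in> b then c else m}) = (\<Sum>b\<in>P. (if 0 \<in> b then c else m))"
      by (simp add: card_SigmaI)
    then show "card ((\<lambda>(P, col). SIGMA b:P. {..<if 0 \<in> b then c else m}) z) = c + m * k"
      using zz sum_blocks[OF p, of c m] ck by simp
  qed
  also have "\<dots> = (c + m * k) * card (Qs c m n k)" by simp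
  finally show ?thesis .
qed

lemma T_Qs: "T_num c m n k = card (Qs c m n k)"
  by (simp add: T_num_def Qs_def)

lemma T_rec: "T_num c m (Suc n) k = (if k = 0 then 0 else T_num c m n (k-1)) + (c + m * k) * T_num c m n k"
proof -
  let ?A = "(if k = 0 then {} else Qs c m n (k-1))"
  have fA: "finite ?A" using finQ by auto
  have fB: "finite (A2 c m n k)" unfolding A2_def
  proof (rule finite_SigmaI)
    show "finite (Qs c m n k)" by (rule finQ)
    fix z assume z: "z \<in> Qs c m n k"
    obtain P col where zz: "z = (P,col)" by (cases z)
    have "partition_on {0..n} P" using z zz by (auto simp: Qs_def CB_iff)
    then have "finite P" by (meson finite_atLeastAtMost finite_elements)
    then show "finite ((\<lambda>(P, col). SIGMA b:P. {..<if 0 \<in> b then c else m}) z)"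
      using zz by auto
  qed
  have d: "F1 n ` ?A \<inter> F2 n ` A2 c m n k = {}"
    using disj_F12[of n c m "k-1" k] by auto
  have i1: "card (F1 n ` ?A) = card ?A"
    using inj_F1[of n c m "k-1"] by (auto intro: card_image)
  have i2: "card (F2 n ` A2 c m n k) = card (A2 c m n k)"
    using inj_F2 by (rule card_image)
  have "T_num c m (Suc n) k = card (F1 n ` ?A) + card (F2 n ` A2 c m n k)"
    unfolding T_Qs decompQ using fA fB d by (simp add: card_Un_disjoint)
  then show ?thesis using i1 i2 card_A2 by (simp add: T_Qs)
qed



lemma T0: "T_num c m 0 k = (if k = 0 then 1 else 0)"
  by (simp add: T_Qs Q0)

lemma T_hi: "k > n \<Longrightarrow> T_num c m n k = 0"
proof (induction n arbitrary: k)
  case 0 then show ?case by (simp add: T0)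
next
  case (Suc n) then show ?case by (simp add: T_rec)
qed

lemma T_diag: "T_num c m n n = 1"
proof (induction n)
  case 0 then show ?case by (simp add: T0)
next
  case (Suc n) then show ?case by (simp add: T_rec T_hi)
qed

primrec pp :: "nat \<Rightarrow> nat \<Rightarrow> nat \<Rightarrow> real poly" where
  "pp c m 0 = 1"
| "pp c m (Suc n) = [:real c, 1:] * pp c m n + smult (real m) (pCons 0 (pderiv (pp c m n)))"

lemma coeff_pp: "coeff (pp c m n) k = real (T_num c m n k)"
proof (induction n arbitrary: k)
  case 0
  then show ?case by (simp add: T0 coeff_1)
next
  case (Suc n)
  show ?case
  proof (cases k)
    case 0
    then show ?thesis using Suc by (simp add: T_rec)
  next
    case (Suc j)
    then show ?thesis using Suc.IH by (simp add: T_rec coeff_pderiv algebra_simps)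
  qed
qed

lemma degree_pp: "degree (pp c m n) = n" and lead_pp: "lead_coeff (pp c m n) = 1"
proof -
  have "degree (pp c m n) \<le> n" by (rule degree_le) (simp add: coeff_pp T_hi)
  moreover have "n \<le> degree (pp c m n)" by (rule le_degree) (simp add: coeff_pp T_diag)
  ultimately show d: "degree (pp c m n) = n" by simp
  show "lead_coeff (pp c m n) = 1" by (simp add: d coeff_pp T_diag)
qed

lemma poly_pp: "poly (pp c m n) x = (\<Sum>k\<le>n. real (T_num c m n k) * x ^ k)"
  by (simp add: poly_altdef degree_pp coeff_pp)

lemma poly_pp_Suc: "poly (pp c m (Suc n)) x = (real c + x) * poly (pp c m n) x + real m * x * poly (pderiv (pp c m n)) x"
  by (simp add: algebra_simps)

declare pp.simps(2)[simp del]

lemma deriv_at_root: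
  fixes r :: "nat \<Rightarrow> real"
  assumes "i < n"
  shows "poly (pderiv (\<Prod>j<n. [:-r j, 1:])) (r i) = (\<Prod>j\<in>{..<n}-{i}. r i - r j)"
proof -
  let ?R = "(\<Prod>j\<in>{..<n}-{i}. [:-r j, 1:])"
  have e: "(\<Prod>j<n. [:-r j, 1:]) = [:-r i, 1:] * ?R"
    using assms by (simp add: prod.remove del: mult_pCons_left)
  have d: "pderiv (\<Prod>j<n. [:-r j, 1:]) = [:-r i, 1:] * pderiv ?R + ?R * pderiv [:-r i, 1:]"
    unfolding e by (rule pderiv_mult)
  have "pderiv [:-r i, 1:] = 1" by (simp add: pderiv_pCons)
  then show ?thesis unfolding d by (simp add: poly_prod del: mult_pCons_left)
qed

lemma sign_prod:
  fixes r :: "nat \<Rightarrow> real"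
  assumes strict: "\<forall>a b. a < b \<longrightarrow> b < n \<longrightarrow> r a < r b" and i: "i < n"
  shows "(-1)^(n - Suc i) * (\<Prod>j\<in>{..<n}-{i}. r i - r j) > 0"
proof -
  let ?S = "{..<n}-{i}"
  have e: "?S \<inter> {j. i < j} = {i<..<n}" using i by auto
  have "(\<Prod>j\<in>?S. (if i < j then -1 else 1::real)) = (-1)^(n - Suc i)"
    by (simp add: prod.If_cases e)
  moreover have "(\<Prod>j\<in>?S. (if i < j then -1 else 1) * (r i - r j)) > 0"
  proof (rule prod_pos)
    fix j assume j: "j \<in> ?S"
    show "0 < (if i < j then -1 else 1) * (r i - r j)"
    proof (cases "i < j")
      case True then show ?thesis using strict j by auto
    next
      case False then have "j < i" using j by auto
      then show ?thesis using strict i by auto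
    qed
  qed
  ultimately show ?thesis by (simp add: prod.distrib)
qed

lemma step:
  fixes r :: "nat \<Rightarrow> real"
  assumes c: "c > 0" and m: "m > 0"
    and strict: "\<forall>a b. a < b \<longrightarrow> b < n \<longrightarrow> r a < r b"
    and neg: "\<forall>i<n. r i < 0"
    and fac: "pp c m n = (\<Prod>i<n. [:-r i, 1:])"
  shows "\<exists>s. (\<forall>a b. a < b \<longrightarrow> b < Suc n \<longrightarrow> s a < s b) \<and> (\<forall>i<Suc n. s i < 0) \<and>
             pp c m (Suc n) = (\<Prod>i<Suc n. [:-s i, 1:])"
proof -
  let ?q = "pp c m (Suc n)"
  let ?P = "pp c m n"
  define t1 where "t1 = (if n = 0 then 0 else r 0)"
  obtain L where L: "L < t1" "(-1)^(Suc n) * poly ?q L > 0"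
  proof -
    define q' where "q' = smult ((-1)^(Suc n)) (pcompose ?q [:0,-1:])"
    have "lead_coeff (pcompose ?q [:0,-1:]) = lead_coeff ?q * (lead_coeff [:0,-1::real:]) ^ degree ?q"
      by (rule lead_coeff_comp) simp
    then have "lead_coeff (pcompose ?q [:0,-1:]) = (-1)^(Suc n)"
      using lead_pp[of c m "Suc n"] degree_pp[of c m "Suc n"] by simp
    then have lq: "lead_coeff q' = 1" unfolding q'_def lead_coeff_smult
      by (simp flip: power_mult_distrib)
    obtain N where N: "\<forall>x\<ge>N. poly q' x \<ge> lead_coeff q'"
      using poly_pinfty_gt_lc[of q'] lq by auto
    define x where "x = max N (1 - t1)"
    have "poly q' x \<ge> 1" using N lq x_def by auto
    moreover have "poly q' x = (-1)^(Suc n) * poly ?q (-x)"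
      unfolding q'_def by (simp add: poly_pcompose)
    ultimately have "(-1)^(Suc n) * poly ?q (-x) > 0" by simp
    moreover have "-x < t1" unfolding x_def by auto
    ultimately show ?thesis using that by blast
  qed
  define t where "t k = (if k = 0 then L else if k \<le> n then r (k-1) else 0)" for k
  have tinc: "t k < t (Suc k)" if "k \<le> n" for k
  proof (cases "k = 0")
    case True
    then show ?thesis using L(1) unfolding t_def t1_def by auto
  next
    case False
    show ?thesis
    proof (cases "Suc k \<le> n")
      case True
      then show ?thesis using False strict unfolding t_def by auto
    next
      case False2: False
      then have "k = n" using that by auto
      then show ?thesis using False neg unfolding t_def by auto
    qed
  qed
  have poly0: "poly ?P (r i) = 0" if "i < n" for i
    using that by (auto simp: fac poly_prod)
  have sgn: "(-1)^(Suc n - k) * poly ?q (t k) > 0" if "k \<le> Suc n" for k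
  proof -
    have "k = 0 \<or> k = Suc n \<or> (0 < k \<and> k \<le> n)" using that by linarith
    then consider "k = 0" | "k = Suc n" | "0 < k \<and> k \<le> n" by argo
    then show ?thesis
    proof cases
      case 1 then show ?thesis using L unfolding t_def by simp
    next
      case 2
      have "poly ?P 0 = (\<Prod>i<n. - r i)" by (simp add: fac poly_prod)
      also have "\<dots> > 0" using neg by (intro prod_pos) auto
      finally have "poly ?P 0 > 0" .
      then have "poly ?q 0 > 0" using c by (simp add: poly_pp_Suc)
      then show ?thesis using 2 unfolding t_def by simp
    next
      case 3
      define i where "i = k - 1"
      have i: "i < n" "k = Suc i" using 3 i_def by auto
      have tk: "t k = r i" using 3 i unfolding t_def by auto
      have D: "poly (pderiv ?P) (r i) = (\<Prod>j\<in>{..<n}-{i}. r i - r j)"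
        using deriv_at_root[OF i(1)] fac by simp
      have sp: "(-1)^(n - Suc i) * (\<Prod>j\<in>{..<n}-{i}. r i - r j) > 0"
        by (rule sign_prod[OF strict i(1)])
      have "poly ?q (r i) = real m * r i * (\<Prod>j\<in>{..<n}-{i}. r i - r j)"
        using poly0[OF i(1)] D by (simp add: poly_pp_Suc)
      moreover have "(-1::real)^(Suc n - k) = - ((-1)^(n - Suc i))"
      proof -
        have "Suc n - k = Suc (n - Suc i)" using i by simp
        then show ?thesis by simp
      qed
      moreover have "real m * (- r i) > 0" using m neg i by (simp add: mult_pos_neg)
      ultimately have "(-1)^(Suc n - k) * poly ?q (t k) =
          (real m * (- r i)) * ((-1)^(n - Suc i) * (\<Prod>j\<in>{..<n}-{i}. r i - r j))"
        using tk by (simp add: algebra_simps)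
      also have "\<dots> > 0" using sp \<open>real m * (- r i) > 0\<close> by (rule mult_pos_pos[rotated])
      finally show ?thesis .
    qed
  qed
  have roots: "\<forall>k\<in>{..n}. \<exists>x. t k < x \<and> x < t (Suc k) \<and> poly ?q x = 0"
  proof
    fix k assume k: "k \<in> {..n}"
    define e :: real where "e = (-1)^(n - k)"
    have ee: "e * e = 1" unfolding e_def by (simp flip: power_mult_distrib)
    have a: "(- e) * poly ?q (t k) > 0" using sgn[of k] k e_def by (simp add: Suc_diff_le)
    have b: "e * poly ?q (t (Suc k)) > 0" using sgn[of "Suc k"] k e_def by simp
    have "((- e) * poly ?q (t k)) * (e * poly ?q (t (Suc k))) > 0" using a b by (rule mult_pos_pos)
    then have "- ((e * e) * (poly ?q (t k) * poly ?q (t (Suc k)))) > 0" by (simp add: algebra_simps)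
    then have "poly ?q (t k) * poly ?q (t (Suc k)) < 0" using ee by simp
    then show "\<exists>x. t k < x \<and> x < t (Suc k) \<and> poly ?q x = 0"
      using poly_IVT[OF tinc] k by auto
  qed
  obtain s where s: "\<forall>k\<in>{..n}. t k < s k \<and> s k < t (Suc k) \<and> poly ?q (s k) = 0"
    using bchoice[OF roots] by blast
  have tmono: "a \<le> b \<longrightarrow> b \<le> Suc n \<longrightarrow> t a \<le> t b" for a b
  proof (induction b)
    case 0 then show ?case by simp
  next
    case (Suc b) then show ?case using tinc[of b] by (auto simp: le_Suc_eq)
  qed
  have sstrict: "\<forall>a b. a < b \<longrightarrow> b < Suc n \<longrightarrow> s a < s b"
  proof (intro allI impI)
    fix a b :: nat assume ab: "a < b" "b < Suc n"
    have "s a < t (Suc a)" using s ab by auto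
    also have "t (Suc a) \<le> t b" using tmono ab by auto
    also have "t b < s b" using s ab by auto
    finally show "s a < s b" .
  qed
  have sneg: "\<forall>i<Suc n. s i < 0"
  proof (intro allI impI)
    fix i assume i: "i < Suc n"
    have "s i < t (Suc i)" using s i by auto
    also have "t (Suc i) \<le> t (Suc n)" using tmono i by auto
    also have "t (Suc n) = 0" unfolding t_def by simp
    finally show "s i < 0" .
  qed
  let ?Q = "(\<Prod>i<Suc n. [:-s i, 1:])"
  have dQ: "degree ?Q = Suc n" by (subst degree_prod_sum_eq) auto
  have lQ: "lead_coeff ?Q = 1" unfolding lead_coeff_prod by simp
  have "?q = ?Q"
  proof (rule poly_eqI_degree_lead_coeff[where n = "Suc n" and A = "s ` {..n}"])
    show "coeff ?q (Suc n) = coeff ?Q (Suc n)" using lQ dQ lead_pp[of c m "Suc n"] degree_pp[of c m "Suc n"] by simp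
    have "inj_on s {..n}"
      by (rule inj_onI) (metis atMost_iff less_Suc_eq_le linorder_neqE_nat order_less_irrefl sstrict)
    then show "Suc n \<le> card (s ` {..n})" by (simp add: card_image)
    show "degree ?q \<le> Suc n" by (simp add: degree_pp)
    show "degree ?Q \<le> Suc n" using dQ by simp
    fix z assume "z \<in> s ` {..n}"
    then obtain k where k: "k \<le> n" "z = s k" by auto
    have "poly ?q z = 0" using s k by auto
    moreover have "poly ?Q z = 0"
    proof -
      have "poly ?Q z = (\<Prod>i<Suc n. poly [:-s i, 1:] z)" by (simp only: poly_prod)
      also have "\<dots> = 0" by (rule prod_zero) (use k in \<open>auto intro!: bexI[of _ k]\<close>)
      finally show ?thesis .
    qed
    ultimately show "poly ?q z = poly ?Q z" by simp
  qed
  then show ?thesis using sstrict sneg by blast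
qed

lemma inv:
  assumes c: "c > 0" and m: "m > 0"
  shows "\<exists>r. (\<forall>a b. a < b \<longrightarrow> b < n \<longrightarrow> r a < r b) \<and> (\<forall>i<n. r i < (0::real)) \<and>
             pp c m n = (\<Prod>i<n. [:-r i, 1:])"
proof (induction n)
  case 0
  show ?case by simp
next
  case (Suc n)
  then obtain r where "(\<forall>a b. a < b \<longrightarrow> b < n \<longrightarrow> r a < r b)" "(\<forall>i<n. r i < (0::real))"
      "pp c m n = (\<Prod>i<n. [:-r i, 1:])" by blast
  then show ?case using step[OF c m] by blast
qed

theorem theorem2:
  fixes c m n :: nat
  assumes "c > 0" and "m > 0" and "n \<ge> 1"
  shows "\<exists>S :: real set. card S = n \<and> (\<forall>r\<in>S. r < 0 \<and>
           (\<Sum>k\<le>n. real (T_num c m n k) * r ^ k) = 0)"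
proof -
  obtain r where strict: "\<forall>a b. a < b \<longrightarrow> b < n \<longrightarrow> r a < r b" and neg: "\<forall>i<n. r i < (0::real)"
      and fac: "pp c m n = (\<Prod>i<n. [:-r i, 1:])" using inv[OF assms(1,2)] by blast
  have "inj_on r {..<n}"
    by (rule inj_onI) (metis lessThan_iff linorder_neqE_nat order_less_irrefl strict)
  then have "card (r ` {..<n}) = n" by (simp add: card_image)
  moreover have "\<forall>x\<in>r ` {..<n}. x < 0 \<and> (\<Sum>k\<le>n. real (T_num c m n k) * x ^ k) = 0"
  proof
    fix x assume "x \<in> r ` {..<n}"
    then obtain i where i: "i < n" "x = r i" by auto
    have "(\<Sum>k\<le>n. real (T_num c m n k) * x ^ k) = poly (pp c m n) x" by (simp add: poly_pp)
    also have "\<dots> = (\<Prod>j<n. poly [:-r j, 1:] x)" by (simp only: fac poly_prod)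
    also have "\<dots> = 0" by (rule prod_zero) (use i in \<open>auto intro!: bexI[of _ i]\<close>)
    finally show "x < 0 \<and> (\<Sum>k\<le>n. real (T_num c m n k) * x ^ k) = 0" using neg i by simp
  qed
  ultimately show ?thesis by blast
qed

end
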